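(* Let $T$ be a set of basic terms, $\kappa$ a time variable, and $\Delta$ the saturation of the sample set $\{t[\kappa]\mid t\in T\}$. Then for any assignment (homomorphism) $h$ from the term algebra to $\mathbf{W}$ and any $n\in\omega^+$, there exists a $\Delta$-diagram $\delta$ such that $\delta(\kappa)=n$ and $\delta(t[\kappa])=[\![t]\!]_h(n)$ for all $t\in T$.
   Context: Time warps: join-preserving maps $f\colon\omega^+\to\omega^+$, $\omega^+=\omega\cup\{\omega\}$, ordered pointwise. $\mathbf{W}=\langle W,\wedge,\vee,\circ,{}^\star,\mathrm{id}\rangle$: pointwise meet/join, composition, identity, and $f^\star$ = largest time warp $h$ with $f\circ h\le p$, where $p(m)=\bigvee\{k\in\omega\mid k<m\}$. Terms are built from variables with $\wedge,\vee,\cdot,{}',1$; basic terms use only variables, $\cdot,{}',1$; $[\![t]\!]_h$ is the value of $t$ in $\mathbf{W}$ under $h$. Samples (formal expressions): $\alpha::=\kappa\mid t[\alpha]\mid \mathrm{suc}(\alpha)\mid\mathrm{last}(t)$ with $\kappa$ a time variable and $t$ a basic term. The relation $\leadsto$ on samples: $t[\alpha]\leadsto\alpha$, $\mathrm{suc}(\alpha)\leadsto\alpha$, $t[\alpha]\leadsto t[\mathrm{last}(t)]$, $(tu)[\alpha]\leadsto t[u[\alpha]]$, $t'[\alpha]\leadsto t[t'[\alpha]]$, $t'[\alpha]\leadsto t[\mathrm{suc}(t'[\alpha])]$. The saturation of a sample set is its closure under $\leadsto$; a set is saturated if closed under $\leadsto$. $S(n)=n+1$ for $n\in\omega$, $S(\omega)=\omega$.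 For saturated $\Delta$, a $\Delta$-diagram is $\delta\colon\Delta\to\omega^+$ such that, whenever the samples mentioned belong to $\Delta$: (1) $\delta(\alpha)\le\delta(\beta)\Rightarrow\delta(t[\alpha])\le\delta(t[\beta])$; (2) $\delta(\alpha)=0\Rightarrow\delta(t[\alpha])=0$; (3) $\delta(\mathrm{suc}(\alpha))=S(\delta(\alpha))$; (4) for $t[\alpha]\in\Delta$: $\delta(\mathrm{last}(t))\le\delta(\alpha)\iff\delta(t[\mathrm{last}(t)])=\delta(t[\alpha])$; (5) $\delta(\mathrm{last}(t))=\omega\Rightarrow\delta(t[\mathrm{last}(t)])=\omega$; (6) $\delta(1[\alpha])=\delta(\alpha)$; (7) $\delta(\mathrm{last}(1))=\omega$; (8) $\delta((tu)[\alpha])=\delta(t[u[\alpha]])$; (9) $\delta(\mathrm{last}(tu))=\omega\Rightarrow\delta(\mathrm{last}(t))=\delta(\mathrm{last}(u))=\omega$; (10) for $t'[\alpha]\in\Delta$: $0<\delta(\alpha)<\omega\Rightarrow\delta(t[t'[\alpha]])<\delta(\alpha)$; (11) for $t'[\alpha]\in\Delta$: $\delta(t'[\alpha])<\omega\Rightarrow\delta(\alpha)\le\delta(t[\mathrm{suc}(t'[\alpha])])$; (12) $\delta(\mathrm{last}(t'))=\omega\Rightarrow\delta(\mathrm{last}(t))=\omega$. *)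

theory Defs
  imports "HOL-Library.Extended_Nat"
begin

text \<open>omega^+ is rendered as enat (finite naturals plus infinity).\<close>

definition time_warp :: "(enat \<Rightarrow> enat) \<Rightarrow> bool" where
  "time_warp f \<longleftrightarrow> (\<forall>A. f (Sup A) = Sup (f ` A))"

definition pred_tw :: "enat \<Rightarrow> enat" where
  "pred_tw m = Sup {enat k | k. enat k < m}"

definition star_tw :: "(enat \<Rightarrow> enat) \<Rightarrow> (enat \<Rightarrow> enat)" where
  "star_tw f = (GREATEST h. time_warp h \<and> f \<circ> h \<le> pred_tw)"

datatype 'v trm = Var 'v | Meet "'v trm" "'v trm" | Join "'v trm" "'v trm"
  | Mult "'v trm" "'v trm" | Star "'v trm" | One

fun basic :: "'v trm \<Rightarrow> bool" where
  "basic (Var x) = True"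
| "basic (Meet t u) = False"
| "basic (Join t u) = False"
| "basic (Mult t u) = (basic t \<and> basic u)"
| "basic (Star t) = basic t"
| "basic One = True"

fun eval :: "('v \<Rightarrow> enat \<Rightarrow> enat) \<Rightarrow> 'v trm \<Rightarrow> enat \<Rightarrow> enat" where
  "eval h (Var x) = h x"
| "eval h (Meet t u) = inf (eval h t) (eval h u)"
| "eval h (Join t u) = sup (eval h t) (eval h u)"
| "eval h (Mult t u) = eval h t \<circ> eval h u"
| "eval h (Star t) = star_tw (eval h t)"
| "eval h One = id"

datatype ('v, 'k) sample = TV 'k | App "'v trm" "('v, 'k) sample"
  | SucS "('v, 'k) sample" | LastS "'v trm"

inductive leadsto :: "('v, 'k) sample \<Rightarrow> ('v, 'k) sample \<Rightarrow> bool" where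
  "leadsto (App t a) a"
| "leadsto (SucS a) a"
| "leadsto (App t a) (App t (LastS t))"
| "leadsto (App (Mult t u) a) (App t (App u a))"
| "leadsto (App (Star t) a) (App t (App (Star t) a))"
| "leadsto (App (Star t) a) (App t (SucS (App (Star t) a)))"

definition saturation :: "('v, 'k) sample set \<Rightarrow> ('v, 'k) sample set" where
  "saturation S = {b. \<exists>a\<in>S. leadsto\<^sup>*\<^sup>* a b}"

definition diagram :: "('v, 'k) sample set \<Rightarrow> (('v, 'k) sample \<Rightarrow> enat) \<Rightarrow> bool" where
  "diagram D d \<longleftrightarrow>
    (\<forall>t a b. a \<in> D \<and> b \<in> D \<and> App t a \<in> D \<and> App t b \<in> D \<longrightarrow>
        d a \<le> d b \<longrightarrow> d (App t a) \<le> d (App t b)) \<and>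
    (\<forall>t a. a \<in> D \<and> App t a \<in> D \<longrightarrow> d a = 0 \<longrightarrow> d (App t a) = 0) \<and>
    (\<forall>a. a \<in> D \<and> SucS a \<in> D \<longrightarrow> d (SucS a) = eSuc (d a)) \<and>
    (\<forall>t a. App t a \<in> D \<and> a \<in> D \<and> LastS t \<in> D \<and> App t (LastS t) \<in> D \<longrightarrow>
        (d (LastS t) \<le> d a \<longleftrightarrow> d (App t (LastS t)) = d (App t a))) \<and>
    (\<forall>t. LastS t \<in> D \<and> App t (LastS t) \<in> D \<longrightarrow> d (LastS t) = \<infinity> \<longrightarrow> d (App t (LastS t)) = \<infinity>) \<and>
    (\<forall>a. App One a \<in> D \<and> a \<in> D \<longrightarrow> d (App One a) = d a) \<and>
    (LastS One \<in> D \<longrightarrow> d (LastS One) = \<infinity>) \<and>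
    (\<forall>t u a. App (Mult t u) a \<in> D \<and> App t (App u a) \<in> D \<longrightarrow>
        d (App (Mult t u) a) = d (App t (App u a))) \<and>
    (\<forall>t u. LastS (Mult t u) \<in> D \<and> LastS t \<in> D \<and> LastS u \<in> D \<longrightarrow>
        d (LastS (Mult t u)) = \<infinity> \<longrightarrow> d (LastS t) = \<infinity> \<and> d (LastS u) = \<infinity>) \<and>
    (\<forall>t a. App (Star t) a \<in> D \<and> a \<in> D \<and> App t (App (Star t) a) \<in> D \<longrightarrow>
        0 < d a \<and> d a < \<infinity> \<longrightarrow> d (App t (App (Star t) a)) < d a) \<and>
    (\<forall>t a. App (Star t) a \<in> D \<and> a \<in> D \<and> App t (SucS (App (Star t) a)) \<in> D \<longrightarrow>
        d (App (Star t) a) < \<infinity> \<longrightarrow> d a \<le> d (App t (SucS (App (Star t) a)))) \<and>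
    (\<forall>t. LastS (Star t) \<in> D \<and> LastS t \<in> D \<longrightarrow> d (LastS (Star t)) = \<infinity> \<longrightarrow> d (LastS t) = \<infinity>)"

end

theory Submission
  imports Defs
begin


lemma Sup_enat_in: "Sup (A::enat set) \<noteq> \<infinity> \<Longrightarrow> A \<noteq> {} \<Longrightarrow> Sup A \<in> A"
  by (auto simp: Sup_enat_def split: if_splits)

lemma Sup_range_enat: "(SUP k. enat k) = \<infinity>"
proof (rule ccontr)
  assume "(SUP k. enat k) \<noteq> \<infinity>"
  then obtain c where c: "(SUP k. enat k) = enat c" by auto
  have "enat (Suc c) \<le> (SUP k. enat k)" by (rule SUP_upper) simp
  then show False using c by simp
qed

lemma tw_mono: "time_warp f \<Longrightarrow> mono f"
proof (rule monoI)
  fix a b :: enat assume tw: "time_warp f" and "a \<le> b"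
  then have "f (Sup {a,b}) = Sup (f ` {a,b})" unfolding time_warp_def by blast
  then have "f b = sup (f a) (f b)" using \<open>a \<le> b\<close> by (simp add: sup_absorb2)
  then show "f a \<le> f b" by (metis sup.cobounded1)
qed

lemma tw_0: "time_warp f \<Longrightarrow> f 0 = 0"
  unfolding time_warp_def by (metis Sup_empty image_empty bot_enat_def)

lemma tw_inf: "time_warp f \<Longrightarrow> f \<infinity> = (SUP k. f (enat k))"
  unfolding time_warp_def by (metis Sup_range_enat image_image)

lemma tw_intro:
  assumes m: "mono f" and z: "f 0 = 0" and i: "f \<infinity> = (SUP k. f (enat k))"
  shows "time_warp f"
  unfolding time_warp_def
proof
  fix A :: "enat set"
  show "f (Sup A) = Sup (f ` A)"
  proof (cases "A = {}")
    case True then show ?thesis using z by (simp add: bot_enat_def)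
  next
    case ne: False
    have le: "Sup (f ` A) \<le> f (Sup A)"
      by (rule Sup_least) (auto intro: monoD[OF m] Sup_upper)
    show ?thesis
    proof (cases "Sup A \<in> A")
      case True
      then have "f (Sup A) \<le> Sup (f ` A)" by (simp add: Sup_upper)
      with le show ?thesis by simp
    next
      case False
      then have inf: "Sup A = \<infinity>" using Sup_enat_in ne by blast
      have "f (enat k) \<le> Sup (f ` A)" for k
      proof -
        have "enat k < Sup A" using inf by simp
        then obtain a where "a \<in> A" "enat k < a" using less_Sup_iff by blast
        then have "f (enat k) \<le> f a" using monoD[OF m] by simp
        also have "\<dots> \<le> Sup (f ` A)" using \<open>a \<in> A\<close> by (simp add: Sup_upper)
        finally show ?thesis .
      qed
      then have "f \<infinity> \<le> Sup (f ` A)" using i by (simp add: SUP_least)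
      with le inf show ?thesis by simp
    qed
  qed
qed

lemma tw_comp: "time_warp f \<Longrightarrow> time_warp g \<Longrightarrow> time_warp (f \<circ> g)"
  unfolding time_warp_def by (simp add: image_comp)

lemma tw_id: "time_warp id"
  unfolding time_warp_def by simp



lemma pred_tw_0: "pred_tw 0 = 0"
  unfolding pred_tw_def by (simp add: bot_enat_def)

lemma pred_tw_Suc: "pred_tw (enat (Suc k)) = enat k"
  unfolding pred_tw_def
proof (rule antisym)
  show "Sup {enat j |j. enat j < enat (Suc k)} \<le> enat k" by (rule Sup_least) auto
  show "enat k \<le> Sup {enat j |j. enat j < enat (Suc k)}" by (rule Sup_upper) auto
qed

lemma pred_tw_inf: "pred_tw \<infinity> = \<infinity>"
proof -
  have "{enat k | k. enat k < \<infinity>} = range enat" by auto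
  then show ?thesis unfolding pred_tw_def using Sup_range_enat by simp
qed

definition rs :: "(enat \<Rightarrow> enat) \<Rightarrow> enat \<Rightarrow> enat" where
  "rs f c = Sup {j. f j \<le> c}"

lemma rs_upper: "f j \<le> c \<Longrightarrow> j \<le> rs f c"
  unfolding rs_def by (simp add: Sup_upper)

lemma rs_prop: "time_warp f \<Longrightarrow> f (rs f c) \<le> c"
proof -
  assume "time_warp f"
  then have "f (rs f c) = Sup (f ` {j. f j \<le> c})" unfolding rs_def time_warp_def by blast
  also have "\<dots> \<le> c" by (rule Sup_least) auto
  finally show ?thesis .
qed

lemma rs_mono: "c \<le> c' \<Longrightarrow> rs f c \<le> rs f c'"
  unfolding rs_def by (rule Sup_subset_mono) auto

definition sexp :: "(enat \<Rightarrow> enat) \<Rightarrow> enat \<Rightarrow> enat" where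
  "sexp f m = (if m = 0 then 0 else if m = \<infinity> then (SUP k. rs f (enat k)) else rs f (m - 1))"

lemma sexp_Suc: "sexp f (enat (Suc k)) = rs f (enat k)"
  by (simp add: sexp_def enat_0_iff one_enat_def)

lemma sexp_SUP: "(SUP k. sexp f (enat k)) = (SUP k. rs f (enat k))"
proof (rule antisym)
  show "(SUP k. sexp f (enat k)) \<le> (SUP k. rs f (enat k))"
  proof (rule SUP_least)
    fix k show "sexp f (enat k) \<le> (SUP k. rs f (enat k))"
    proof (cases k)
      case 0 then show ?thesis by (simp add: sexp_def zero_enat_def[symmetric])
    next
      case (Suc j) show ?thesis unfolding Suc sexp_Suc by (rule SUP_upper) simp
    qed
  qed
  show "(SUP k. rs f (enat k)) \<le> (SUP k. sexp f (enat k))"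
  proof (rule SUP_least)
    fix k show "rs f (enat k) \<le> (SUP k. sexp f (enat k))"
      unfolding sexp_Suc[symmetric] by (rule SUP_upper) simp
  qed
qed

lemma sexp_mono: "mono (sexp f)"
proof (rule monoI)
  fix a b :: enat assume "a \<le> b"
  show "sexp f a \<le> sexp f b"
  proof (cases "a = 0")
    case True then show ?thesis by (simp add: sexp_def)
  next
    case a0: False
    show ?thesis
    proof (cases b)
      case (enat kb)
      then obtain ka where ka: "a = enat ka" using \<open>a \<le> b\<close> by (cases a) auto
      then have "a - 1 \<le> b - 1" using \<open>a \<le> b\<close> enat by (simp add: one_enat_def)
      moreover have "b \<noteq> 0" using a0 \<open>a \<le> b\<close> by auto
      ultimately show ?thesis using a0 ka enat by (simp add: sexp_def rs_mono)
    next
      case infinity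
      show ?thesis
      proof (cases a)
        case (enat ka)
        then obtain j where "ka = Suc j" using a0 by (cases ka) (auto simp: enat_0)
        then have "sexp f a = rs f (enat j)" using enat sexp_Suc by simp
        also have "\<dots> \<le> (SUP k. rs f (enat k))" by (rule SUP_upper) simp
        also have "\<dots> = sexp f b" using infinity by (simp add: sexp_def)
        finally show ?thesis .
      next
        case infinity then show ?thesis using \<open>b = \<infinity>\<close> by simp
      qed
    qed
  qed
qed

lemma sexp_inf: "sexp f \<infinity> = (SUP k. rs f (enat k))"
  by (simp add: sexp_def)

lemma sexp_tw: "time_warp (sexp f)"
  by (rule tw_intro[OF sexp_mono]) (simp_all add: sexp_inf sexp_SUP, simp add: sexp_def)

lemma star_tw_eq: assumes tw: "time_warp f" shows "star_tw f = sexp f"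
  unfolding star_tw_def
proof (rule Greatest_equality)
  show "time_warp (sexp f) \<and> f \<circ> sexp f \<le> pred_tw"
  proof (intro conjI sexp_tw le_funI)
    fix m show "(f \<circ> sexp f) m \<le> pred_tw m"
    proof (cases m)
      case (enat k) show ?thesis
      proof (cases k)
        case 0 then show ?thesis using enat by (simp add: zero_enat_def[symmetric] sexp_def tw_0[OF tw])
      next
        case (Suc j) then show ?thesis using enat by (simp add: sexp_Suc pred_tw_Suc rs_prop[OF tw])
      qed
    next
      case infinity then show ?thesis by (simp add: pred_tw_inf)
    qed
  qed
next
  fix y assume y: "time_warp y \<and> f \<circ> y \<le> pred_tw"
  have fin: "y (enat k) \<le> sexp f (enat k)" for k
  proof (cases k)
    case 0 then show ?thesis using tw_0 y by (simp add: zero_enat_def[symmetric] sexp_def)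
  next
    case (Suc j)
    have "f (y (enat k)) \<le> pred_tw (enat k)" using y by (auto simp: le_fun_def)
    then show ?thesis using Suc by (simp add: sexp_Suc pred_tw_Suc rs_upper)
  qed
  show "y \<le> sexp f"
  proof (rule le_funI)
    fix m show "y m \<le> sexp f m"
    proof (cases m)
      case (enat k) then show ?thesis using fin by simp
    next
      case infinity
      have "y \<infinity> = (SUP k. y (enat k))" using y tw_inf by blast
      also have "\<dots> \<le> (SUP k. sexp f (enat k))" by (rule SUP_mono) (use fin in blast)
      also have "\<dots> = sexp f \<infinity>" by (simp add: sexp_inf sexp_SUP)
      finally show ?thesis using infinity by simp
    qed
  qed
qed



fun okS :: "('v, 'k) sample \<Rightarrow> bool" where
  "okS (TV k) = True"
| "okS (App t a) = (basic t \<and> okS a)"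
| "okS (SucS a) = okS a"
| "okS (LastS t) = basic t"

lemma leadsto_ok: "leadsto a b \<Longrightarrow> okS a \<Longrightarrow> okS b"
  by (induct rule: leadsto.induct) auto

lemma rtc_ok: "leadsto\<^sup>*\<^sup>* a b \<Longrightarrow> okS a \<Longrightarrow> okS b"
  by (induct rule: rtranclp_induct) (auto dest: leadsto_ok)

lemma D_ok: "\<forall>t\<in>T. basic t \<Longrightarrow> b \<in> saturation {App t (TV \<kappa>) |t. t \<in> T} \<Longrightarrow> okS b"
  unfolding saturation_def using rtc_ok by fastforce

lemma eval_tw: "\<forall>x. time_warp (h x) \<Longrightarrow> basic t \<Longrightarrow> time_warp (eval h t)"
  by (induct t) (auto simp: tw_comp tw_id star_tw_eq sexp_tw)

lemma le_fin: "x \<le> y \<Longrightarrow> y \<noteq> (\<infinity>::enat) \<Longrightarrow> x \<noteq> \<infinity>"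
proof
  assume "x \<le> y" "y \<noteq> \<infinity>" "x = \<infinity>"
  then have "\<infinity> \<le> y" by simp
  then have "y = \<infinity>" by (simp add: top_enat_def[symmetric] top_unique)
  then show False using \<open>y \<noteq> \<infinity>\<close> by simp
qed

definition lst :: "(enat \<Rightarrow> enat) \<Rightarrow> enat" where
  "lst f = (LEAST m. f m = f \<infinity>)"

lemma lst_prop: "f (lst f) = f \<infinity>"
  unfolding lst_def by (rule LeastI[where k="\<infinity>"]) (rule refl)

lemma lst_exists: "f x = f \<infinity> \<Longrightarrow> lst f \<le> x"
  unfolding lst_def by (rule Least_le)

lemma lst_le: assumes "time_warp f" shows "lst f \<le> x \<longleftrightarrow> f x = f \<infinity>"
proof
  assume "lst f \<le> x"
  have m: "mono f" using tw_mono[OF assms] .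
  have "f (lst f) \<le> f x" by (rule monoD[OF m]) fact
  moreover have "f x \<le> f \<infinity>" by (rule monoD[OF m]) simp
  ultimately show "f x = f \<infinity>" using lst_prop[of f] by simp
qed (rule lst_exists)

lemma lst_fin: assumes tw: "time_warp f" and ne: "f \<infinity> \<noteq> \<infinity>" shows "lst f \<noteq> \<infinity>"
proof -
  have "f \<infinity> = Sup (range (\<lambda>k. f (enat k)))" using tw_inf[OF tw] by simp
  then have "f \<infinity> \<in> range (\<lambda>k. f (enat k))" using Sup_enat_in[of "range (\<lambda>k. f (enat k))"] ne by auto
  then obtain k where "f (enat k) = f \<infinity>" by auto
  then have "lst f \<le> enat k" by (rule lst_exists)
  then show ?thesis by (rule le_fin) simp
qed

lemma lst_inf: "time_warp f \<Longrightarrow> lst f = \<infinity> \<Longrightarrow> f \<infinity> = \<infinity>"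
  using lst_fin by blast

lemma lst_id: "lst id = \<infinity>"
  unfolding lst_def by (rule Least_equality) simp_all

lemma lst_comp: assumes tf: "time_warp f" and tg: "time_warp g" and l: "lst (f \<circ> g) = \<infinity>"
  shows "lst f = \<infinity> \<and> lst g = \<infinity>"
proof -
  have A: "lst (f \<circ> g) \<noteq> \<infinity>" if "lst g \<noteq> \<infinity>"
  proof -
    have "(f \<circ> g) (lst g) = (f \<circ> g) \<infinity>" using lst_prop[of g] by simp
    then have "lst (f \<circ> g) \<le> lst g" by (rule lst_exists)
    then show ?thesis using that by (rule le_fin)
  qed
  have B: "lst (f \<circ> g) \<noteq> \<infinity>" if lf: "lst f \<noteq> \<infinity>"
  proof (cases "g \<infinity> = \<infinity>")
    case False then show ?thesis using A lst_fin[OF tg] by blast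
  next
    case True
    then have "lst f < (SUP k. g (enat k))" using tw_inf[OF tg] lf by (simp add: less_le)
    then obtain k where "lst f < g (enat k)" by (auto simp: less_SUP_iff)
    then have "lst f \<le> g (enat k)" by simp
    then have "f (g (enat k)) = f \<infinity>" using lst_le[OF tf] by blast
    then have "(f \<circ> g) (enat k) = (f \<circ> g) \<infinity>" using True by simp
    then have "lst (f \<circ> g) \<le> enat k" by (rule lst_exists)
    then show ?thesis by (rule le_fin) simp
  qed
  show ?thesis using A B l by blast
qed

lemma star10: assumes tw: "time_warp f" and "0 < d" "d < \<infinity>" shows "f (sexp f d) < d"
proof -
  obtain j where d: "d = enat (Suc j)" using assms(2,3)
    by (cases d) (auto simp: zero_enat_def gr0_conv_Suc)
  have "f (sexp f d) \<le> enat j" unfolding d sexp_Suc by (rule rs_prop[OF tw])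
  then show ?thesis using d by (simp add: le_less_trans)
qed

lemma rs_suc: assumes tw: "time_warp f" and fin: "rs f c < \<infinity>" shows "c < f (eSuc (rs f c))"
proof (rule ccontr)
  assume "\<not> c < f (eSuc (rs f c))"
  then have "eSuc (rs f c) \<le> rs f c" by (intro rs_upper) simp
  then show False using fin by (cases "rs f c") (auto simp: eSuc_enat)
qed

lemma star11: assumes tw: "time_warp f" and fin: "sexp f d < \<infinity>" shows "d \<le> f (eSuc (sexp f d))"
proof (cases d)
  case (enat k)
  show ?thesis
  proof (cases k)
    case 0 then show ?thesis using enat by (simp add: zero_enat_def[symmetric])
  next
    case (Suc j)
    then have "enat j < f (eSuc (sexp f d))" using rs_suc[OF tw] fin enat by (simp add: sexp_Suc)
    then show ?thesis using enat Suc by (simp add: Suc_ile_eq)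
  qed
next
  case infinity
  define M where "M = (SUP k. rs f (enat k))"
  have sM: "sexp f d = M" using infinity by (simp add: sexp_inf M_def)
  have "f (eSuc M) = \<infinity>"
  proof (rule ccontr)
    assume "f (eSuc M) \<noteq> \<infinity>"
    then obtain c where c: "f (eSuc M) = enat c" by auto
    have "eSuc M \<le> rs f (enat c)" using c by (intro rs_upper) simp
    also have "\<dots> \<le> M" unfolding M_def by (rule SUP_upper) simp
    finally show False using fin sM by (cases M) (auto simp: eSuc_enat)
  qed
  then show ?thesis using sM by simp
qed

lemma star12: assumes tw: "time_warp f" and l: "lst (sexp f) = \<infinity>" shows "lst f = \<infinity>"
proof (rule ccontr)
  assume lf: "lst f \<noteq> \<infinity>"
  have "lst (sexp f) \<noteq> \<infinity>"
  proof (cases "f \<infinity>")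
    case (enat c)
    have "f j \<le> f \<infinity>" for j by (rule monoD[OF tw_mono[OF tw]]) simp
    then have "{j. f j \<le> enat c} = UNIV" using enat by auto
    then have "rs f (enat c) = \<infinity>" unfolding rs_def by (simp add: top_enat_def)
    then have e: "sexp f (enat (Suc c)) = \<infinity>" by (simp add: sexp_Suc)
    have "sexp f (enat (Suc c)) \<le> sexp f \<infinity>" by (rule monoD[OF sexp_mono]) simp
    then have "sexp f (enat (Suc c)) = sexp f \<infinity>" using e by simp
    then have "lst (sexp f) \<le> enat (Suc c)" by (rule lst_exists)
    then show ?thesis by (rule le_fin) simp
  next
    case infinity
    have fl: "f (lst f) = \<infinity>" using lst_prop[of f] infinity by simp
    have "rs f (enat k) \<le> lst f" for k
      unfolding rs_def
    proof (rule Sup_least)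
      fix j assume "j \<in> {j. f j \<le> enat k}"
      then have fj: "f j \<le> enat k" by simp
      show "j \<le> lst f"
      proof (rule ccontr)
        assume "\<not> j \<le> lst f"
        then have "lst f \<le> j" by simp
        then have "f (lst f) \<le> f j" by (rule monoD[OF tw_mono[OF tw]])
        then show False using fl fj by simp
      qed
    qed
    then have "sexp f \<infinity> \<le> lst f" by (simp add: sexp_inf SUP_least)
    then have "sexp f \<infinity> \<noteq> \<infinity>" using lf by (rule le_fin)
    then show ?thesis using lst_fin[OF sexp_tw] by blast
  qed
  then show False using l by simp
qed



fun dl :: "('v \<Rightarrow> enat \<Rightarrow> enat) \<Rightarrow> enat \<Rightarrow> ('v, 'k) sample \<Rightarrow> enat" where
  "dl h n (TV k) = n"
| "dl h n (App t a) = eval h t (dl h n a)"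
| "dl h n (SucS a) = eSuc (dl h n a)"
| "dl h n (LastS t) = lst (eval h t)"

theorem proposition3p3:
  fixes T :: "'v trm set" and \<kappa> :: 'k and h :: "'v \<Rightarrow> enat \<Rightarrow> enat" and n :: enat
  assumes "\<forall>t\<in>T. basic t"
    and "\<forall>x. time_warp (h x)"
  shows "\<exists>\<delta>. diagram (saturation {App t (TV \<kappa>) | t. t \<in> T}) \<delta> \<and> \<delta> (TV \<kappa>) = n \<and>
           (\<forall>t\<in>T. \<delta> (App t (TV \<kappa>)) = eval h t n)"
proof (intro exI conjI)
  let ?D = "saturation {App t (TV \<kappa>) | t. t \<in> T}"
  let ?d = "dl h n"
  have ok: "b \<in> ?D \<Longrightarrow> okS b" for b by (rule D_ok[OF assms(1)])
  have twA: "App t a \<in> ?D \<Longrightarrow> time_warp (eval h t)" for t a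
    using ok[of "App t a"] eval_tw[OF assms(2)] by simp
  have twL: "LastS t \<in> ?D \<Longrightarrow> time_warp (eval h t)" for t
    using ok[of "LastS t"] eval_tw[OF assms(2)] by simp
  have stA: "App (Star t) a \<in> ?D \<Longrightarrow> time_warp (eval h t) \<and> eval h (Star t) = sexp (eval h t)" for t a
    using ok[of "App (Star t) a"] eval_tw[OF assms(2)] star_tw_eq by simp
  show "?d (TV \<kappa>) = n" by simp
  show "\<forall>t\<in>T. ?d (App t (TV \<kappa>)) = eval h t n" by simp
  show "diagram ?D ?d"
    unfolding diagram_def
  proof (intro conjI allI impI)
    fix t a b assume "a \<in> ?D \<and> b \<in> ?D \<and> App t a \<in> ?D \<and> App t b \<in> ?D" "?d a \<le> ?d b"
    then have "time_warp (eval h t)" using twA by blast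
    then have "eval h t (?d a) \<le> eval h t (?d b)" using monoD[OF tw_mono] \<open>?d a \<le> ?d b\<close> by blast
    then show "?d (App t a) \<le> ?d (App t b)" by simp
  next
    fix t a assume "a \<in> ?D \<and> App t a \<in> ?D" "?d a = 0"
    then have "time_warp (eval h t)" using twA by blast
    then show "?d (App t a) = 0" using tw_0 \<open>?d a = 0\<close> by simp
  next
    fix a show "?d (SucS a) = eSuc (?d a)" by simp
  next
    fix t a assume A: "App t a \<in> ?D \<and> a \<in> ?D \<and> LastS t \<in> ?D \<and> App t (LastS t) \<in> ?D"
    then have tw: "time_warp (eval h t)" using twA by blast
    show "?d (LastS t) \<le> ?d a \<longleftrightarrow> ?d (App t (LastS t)) = ?d (App t a)"
      using lst_le[OF tw, of "?d a"] lst_prop[of "eval h t"] by auto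
  next
    fix t assume A: "LastS t \<in> ?D \<and> App t (LastS t) \<in> ?D" "?d (LastS t) = \<infinity>"
    then have tw: "time_warp (eval h t)" using twL by blast
    show "?d (App t (LastS t)) = \<infinity>"
      using A lst_inf[OF tw] lst_prop[of "eval h t"] by simp
  next
    fix a show "?d (App One a) = ?d a" by simp
  next
    show "?d (LastS One) = \<infinity>" using lst_id by simp
  next
    fix t u a show "?d (App (Mult t u) a) = ?d (App t (App u a))" by simp
  next
    fix t u assume A: "LastS (Mult t u) \<in> ?D \<and> LastS t \<in> ?D \<and> LastS u \<in> ?D"
      "?d (LastS (Mult t u)) = \<infinity>"
    then have "time_warp (eval h t)" "time_warp (eval h u)" using twL by blast+
    then have "?d (LastS t) = \<infinity> \<and> ?d (LastS u) = \<infinity>" using A(2) lst_comp by simp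
    then show "?d (LastS t) = \<infinity>" by simp
  next
    fix t u assume A: "LastS (Mult t u) \<in> ?D \<and> LastS t \<in> ?D \<and> LastS u \<in> ?D"
      "?d (LastS (Mult t u)) = \<infinity>"
    then have "time_warp (eval h t)" "time_warp (eval h u)" using twL by blast+
    then have "?d (LastS t) = \<infinity> \<and> ?d (LastS u) = \<infinity>" using A(2) lst_comp by simp
    then show "?d (LastS u) = \<infinity>" by simp
  next
    fix t a assume A: "App (Star t) a \<in> ?D \<and> a \<in> ?D \<and> App t (App (Star t) a) \<in> ?D"
      "0 < ?d a \<and> ?d a < \<infinity>"
    then have s: "time_warp (eval h t) \<and> eval h (Star t) = sexp (eval h t)" using stA by blast
    show "?d (App t (App (Star t) a)) < ?d a" using star10[of "eval h t" "?d a"] s A(2) by simp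
  next
    fix t a assume A: "App (Star t) a \<in> ?D \<and> a \<in> ?D \<and> App t (SucS (App (Star t) a)) \<in> ?D"
      "?d (App (Star t) a) < \<infinity>"
    then have s: "time_warp (eval h t) \<and> eval h (Star t) = sexp (eval h t)" using stA by blast
    show "?d a \<le> ?d (App t (SucS (App (Star t) a)))" using star11[of "eval h t" "?d a"] s A(2) by simp
  next
    fix t assume A: "LastS (Star t) \<in> ?D \<and> LastS t \<in> ?D" "?d (LastS (Star t)) = \<infinity>"
    then have tw: "time_warp (eval h t)" using twL by blast
    then show "?d (LastS t) = \<infinity>" using A(2) star12[OF tw] star_tw_eq[OF tw] by simp
  qed
qed


end
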